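(* Let $f_{ij}>0$ for $i\neq j\in\{g,p,s\}$, let $v_g,v_s>0$, and assume $v_sF_{gp}>v_gF_{sp}$ (equivalently $V<0$). Consider nonnegative, not identically zero, time-independent solutions $P_g(x),P_p(x),P_s(x)$, $x\in[0,\infty)$, of $$\begin{aligned} 0&=-v_g P_g'-(f_{gs}+f_{gp})P_g+f_{pg}P_p+f_{sg}P_s,\\ 0&=f_{gp}P_g-(f_{pg}+f_{ps})P_p+f_{sp}P_s,\\ 0&=v_s P_s'+f_{gs}P_g+f_{ps}P_p-(f_{sg}+f_{sp})P_s, \end{aligned}$$ with $P_g(x),P_s(x)\to0$ as $x\to\infty$ and $P_g,P_s$ integrable on $[0,\infty)$. Then $P_g$, $P_p$ and $P_s$ are each constant multiples of $e^{-x/\langle L\rangle}$ (in particular $P_s=\frac{v_g}{v_s}P_g$), so the normalized length distribution is exponential with mean $$\langle L\rangle=\frac{v_sv_g}{v_s\frac{F_{gp}}{F_p}-v_g\frac{F_{sp}}{F_p}}=\frac{v_gv_sF_p}{v_sF_{gp}-v_gF_{sp}}.$$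
   Context: $P_i(x,t)$, $i\in\{g,p,s\}$, is the probability density of finding the microtubule at time $t$ in state growth ($g$, growing at velocity $v_g$), pause ($p$) or shrinkage ($s$, shrinking at velocity $v_s$) with length $x$; $f_{ij}$ is the transition rate from state $i$ to state $j$. The system in the claim is the steady state ($\partial_t=0$) of the master equations $\partial_tP_g=-v_g\partial_xP_g-(f_{gs}+f_{gp})P_g+f_{pg}P_p+f_{sg}P_s$, $\partial_tP_p=f_{gp}P_g-(f_{pg}+f_{ps})P_p+f_{sp}P_s$, $\partial_tP_s=v_s\partial_xP_s+f_{gs}P_g+f_{ps}P_p-(f_{sg}+f_{sp})P_s$. Notation: $F_p=f_{pg}+f_{ps}$; $F_{gp}=f_{gs}f_{pg}+f_{gs}f_{ps}+f_{gp}f_{ps}$; $F_{sp}=f_{sg}f_{pg}+f_{sg}f_{ps}+f_{sp}f_{pg}$; $F_{sg}=f_{sp}f_{gs}+f_{sp}f_{gp}+f_{sg}f_{gp}$; $\Omega=F_{sp}+F_{gp}+F_{sg}$; $V=(v_gF_{sp}-v_sF_{gp})/\Omega$. *)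

theory Defs
  imports "HOL-Analysis.Analysis"
begin

definition Fp :: "real \<Rightarrow> real \<Rightarrow> real" where
  "Fp fpg fps = fpg + fps"

definition Fgp :: "real \<Rightarrow> real \<Rightarrow> real \<Rightarrow> real \<Rightarrow> real" where
  "Fgp fgs fgp fpg fps = fgs * fpg + fgs * fps + fgp * fps"

definition Fsp :: "real \<Rightarrow> real \<Rightarrow> real \<Rightarrow> real \<Rightarrow> real" where
  "Fsp fsg fsp fpg fps = fsg * fpg + fsg * fps + fsp * fpg"

end

theory Submission
  imports Defs
begin

theorem lemma2:
  fixes fgs fgp fpg fps fsg fsp vg vs :: real
    and Pg Pp Ps dPg dPs :: "real \<Rightarrow> real"
  assumes rates: "fgs > 0" "fgp > 0" "fpg > 0" "fps > 0" "fsg > 0" "fsp > 0"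
    and vel: "vg > 0" "vs > 0"
    and Vneg: "vs * Fgp fgs fgp fpg fps > vg * Fsp fsg fsp fpg fps"
    and nonneg: "\<And>x. x \<ge> 0 \<Longrightarrow> Pg x \<ge> 0 \<and> Pp x \<ge> 0 \<and> Ps x \<ge> 0"
    and nonzero: "\<exists>x\<ge>0. Pg x \<noteq> 0 \<or> Pp x \<noteq> 0 \<or> Ps x \<noteq> 0"
    and derg: "\<And>x. x \<ge> 0 \<Longrightarrow> (Pg has_real_derivative dPg x) (at x within {0..})"
    and ders: "\<And>x. x \<ge> 0 \<Longrightarrow> (Ps has_real_derivative dPs x) (at x within {0..})"
    and eqg: "\<And>x. x \<ge> 0 \<Longrightarrow>
       0 = - vg * dPg x - (fgs + fgp) * Pg x + fpg * Pp x + fsg * Ps x"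
    and eqp: "\<And>x. x \<ge> 0 \<Longrightarrow>
       0 = fgp * Pg x - (fpg + fps) * Pp x + fsp * Ps x"
    and eqs: "\<And>x. x \<ge> 0 \<Longrightarrow>
       0 = vs * dPs x + fgs * Pg x + fps * Pp x - (fsg + fsp) * Ps x"
    and limg: "(Pg \<longlongrightarrow> 0) at_top"
    and lims: "(Ps \<longlongrightarrow> 0) at_top"
    and intg: "Pg integrable_on {0..}"
    and ints: "Ps integrable_on {0..}"
  shows "let L = vg * vs * Fp fpg fps /
                 (vs * Fgp fgs fgp fpg fps - vg * Fsp fsg fsp fpg fps)
         in L > 0
          \<and> (\<exists>cg cp cs. \<forall>x\<ge>0. Pg x = cg * exp (- x / L) \<and> Pp x = cp * exp (- x / L)
                                 \<and> Ps x = cs * exp (- x / L))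
          \<and> (\<forall>x\<ge>0. Ps x = vg / vs * Pg x)
          \<and> (\<forall>x\<ge>0. (Pg x + Pp x + Ps x) / integral {0..} (\<lambda>y. Pg y + Pp y + Ps y)
                     = exp (- x / L) / L)"
proof -
  define F where "F = Fp fpg fps"
  define A where "A = Fgp fgs fgp fpg fps"
  define B where "B = Fsp fsg fsp fpg fps"
  define D where "D = vs * A - vg * B"
  define L where "L = vg * vs * F / D"
  have Fpos: "F > 0" using rates by (simp add: F_def Fp_def)
  have Dpos: "D > 0" using Vneg by (simp add: D_def A_def B_def)
  have Lpos: "L > 0" unfolding L_def using Fpos Dpos vel by simp
  have d1: "vg * dPg x - vs * dPs x = 0" if "x \<ge> 0" for x
    using eqg[OF that] eqs[OF that] eqp[OF that] by (simp add: algebra_simps)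
  have "\<exists>c. \<forall>x\<in>{0::real..}. vg * Pg x - vs * Ps x = c"
  proof (rule has_field_derivative_zero_constant)
    fix x :: real assume "x \<in> {0..}"
    then have x: "x \<ge> 0" by simp
    have "((\<lambda>x. vg * Pg x - vs * Ps x) has_field_derivative (vg * dPg x - vs * dPs x)) (at x within {0..})"
      by (intro DERIV_diff DERIV_cmult derg[OF x] ders[OF x])
    then show "((\<lambda>x. vg * Pg x - vs * Ps x) has_field_derivative 0) (at x within {0..})"
      using d1[OF x] by simp
  qed simp
  then obtain c where c: "\<And>x. x \<ge> 0 \<Longrightarrow> vg * Pg x - vs * Ps x = c" by auto
  have "((\<lambda>x. vg * Pg x - vs * Ps x) \<longlongrightarrow> vg * 0 - vs * 0) at_top"
    by (intro tendsto_intros limg lims)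
  then have "((\<lambda>x. vg * Pg x - vs * Ps x) \<longlongrightarrow> 0) at_top" by simp
  moreover have "eventually (\<lambda>x. vg * Pg x - vs * Ps x = c) at_top"
    using eventually_ge_at_top[of "0::real"] by eventually_elim (simp add: c)
  moreover have "((\<lambda>x. vg * Pg x - vs * Ps x) \<longlongrightarrow> c) at_top" using calculation(2) by (rule tendsto_eventually)
  ultimately have c0: "c = 0" using tendsto_unique trivial_limit_at_top_linorder by blast
  have PsPg: "Ps x = vg / vs * Pg x" if "x \<ge> 0" for x
    using c[OF that] c0 vel by (simp add: field_simps)
  have PpPg: "Pp x = (fgp + fsp * (vg / vs)) / F * Pg x" if "x \<ge> 0" for x
  proof -
    have "F * Pp x = fgp * Pg x + fsp * Ps x" using eqp[OF that] by (simp add: F_def Fp_def)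
    then show ?thesis using PsPg[OF that] Fpos by (simp add: field_simps)
  qed
  have dg: "dPg x = - Pg x / L" if x: "x \<ge> 0" for x
  proof -
    have h1: "F * Pp x = fgp * Pg x + fsp * Ps x" using eqp[OF x] by (simp add: F_def Fp_def)
    have h0: "vg * dPg x = - (fgs + fgp) * Pg x + fsg * Ps x + fpg * Pp x"
      using eqg[OF x] by (simp add: algebra_simps)
    have "F * (vg * dPg x) = F * (- (fgs + fgp) * Pg x + fsg * Ps x) + fpg * (F * Pp x)"
      unfolding h0 by (simp add: algebra_simps)
    also have "\<dots> = - A * Pg x + B * Ps x"
      unfolding h1 by (simp add: A_def B_def F_def Fp_def Fgp_def Fsp_def algebra_simps)
    finally have h2: "F * (vg * dPg x) = - A * Pg x + B * Ps x" .
    have "vs * (F * (vg * dPg x)) = - D * Pg x"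
      unfolding h2 PsPg[OF x] D_def using vel by (simp add: field_simps)
    then show ?thesis unfolding L_def using Fpos Dpos vel by (simp add: field_simps)
  qed
  have "\<exists>c. \<forall>x\<in>{0::real..}. Pg x * exp (x / L) = c"
  proof (rule has_field_derivative_zero_constant)
    fix x :: real assume "x \<in> {0..}"
    then have x: "x \<ge> 0" by simp
    have "((\<lambda>x. Pg x * exp (x / L)) has_field_derivative
           (dPg x * exp (x / L) + Pg x * (exp (x / L) * (1 / L)))) (at x within {0..})"
      by (intro derivative_eq_intros derg[OF x]) (use derg[OF x] Lpos in auto)
    then show "((\<lambda>x. Pg x * exp (x / L)) has_field_derivative 0) (at x within {0..})"
      using dg[OF x] Lpos by (simp add: field_simps)
  qed simp
  then obtain cg where cg: "\<And>x. x \<ge> 0 \<Longrightarrow> Pg x * exp (x / L) = cg" by auto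
  have Pgx: "Pg x = cg * exp (- x / L)" if "x \<ge> 0" for x
  proof -
    have "Pg x = Pg x * exp (x / L) * exp (- x / L)"
      by (simp add: mult.assoc exp_add[symmetric])
    then show ?thesis using cg[OF that] by simp
  qed
  define k where "k = (fgp + fsp * (vg / vs)) / F"
  have kpos: "k > 0" unfolding k_def using rates vel Fpos by (intro divide_pos_pos add_pos_pos mult_pos_pos) auto
  have Ppx: "Pp x = (k * cg) * exp (- x / L)" if "x \<ge> 0" for x
    using PpPg[OF that] Pgx[OF that] by (simp add: k_def)
  have Psx: "Ps x = (vg / vs * cg) * exp (- x / L)" if "x \<ge> 0" for x
    using PsPg[OF that] Pgx[OF that] by simp
  have cgpos: "cg > 0"
  proof -
    have "cg = Pg 0" using Pgx[of 0] by simp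
    then have "cg \<ge> 0" using nonneg[of 0] by simp
    moreover have "cg \<noteq> 0"
    proof
      assume "cg = 0"
      then show False using nonzero Pgx Ppx Psx by auto
    qed
    ultimately show ?thesis by simp
  qed
  define M where "M = cg + k * cg + vg / vs * cg"
  have Mpos: "M > 0" unfolding M_def using cgpos kpos vel by (simp add: add_pos_pos)
  have sum: "Pg x + Pp x + Ps x = M * exp (- x / L)" if "x \<ge> 0" for x
    using Pgx[OF that] Ppx[OF that] Psx[OF that] by (simp add: M_def algebra_simps)
  have "((\<lambda>x::real. exp (-(1/L)*x)) has_integral exp (-(1/L)*0)/(1/L)) {0..}"
    by (rule has_integral_exp_minus_to_infinity) (use Lpos in simp)
  then have "((\<lambda>x::real. exp (- x / L)) has_integral L) {0..}" by simp
  then have "((\<lambda>x::real. M * exp (- x / L)) has_integral M * L) {0..}"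
    by (rule has_integral_mult_right)
  then have "((\<lambda>y. Pg y + Pp y + Ps y) has_integral M * L) {0..}"
    by (rule has_integral_cong[THEN iffD1, rotated]) (simp add: sum)
  then have I: "integral {0..} (\<lambda>y. Pg y + Pp y + Ps y) = M * L" by (rule integral_unique)
  show ?thesis
    unfolding Let_def F_def[symmetric] A_def[symmetric] B_def[symmetric] D_def[symmetric]
      L_def[symmetric]
  proof (intro conjI allI impI)
    show "L > 0" by (rule Lpos)
    show "\<exists>cg cp cs. \<forall>x\<ge>0. Pg x = cg * exp (- x / L) \<and> Pp x = cp * exp (- x / L)
                                 \<and> Ps x = cs * exp (- x / L)"
      using Pgx Ppx Psx by blast
  next
    fix x :: real assume "x \<ge> 0" then show "Ps x = vg / vs * Pg x" by (rule PsPg)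
  next
    fix x :: real assume "x \<ge> 0"
    then show "(Pg x + Pp x + Ps x) / integral {0..} (\<lambda>y. Pg y + Pp y + Ps y) = exp (- x / L) / L"
      unfolding I sum[OF \<open>x \<ge> 0\<close>] using Mpos Lpos by simp
  qed
qed

end
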